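(* Let $\eta\in(0,1)$ and, for $N_S>0$ and $\xi\in[0,1]$, let $$I(\xi;N_S)=4N_S\left\{\frac{1-\xi}{1-2\eta^2\left(\sqrt{\xi N_S(1+\xi N_S)}-\xi N_S\right)}+\frac{\xi\left[(1-\eta^2)^2+\eta^4\right]}{(1-\eta^2)\left(1+2\xi N_S\eta^2(1-\eta^2)\right)}\right\}.$$ Let $f_1(\eta,N_S)=\frac{1}{4N_S}\,\partial_\xi I(\xi;N_S)\big|_{\xi=1}$. If $\eta>1/\sqrt2$, then $N_S\mapsto f_1(\eta,N_S)$ has exactly one zero $\bar N_S^{(0)}(\eta)$ on $(0,\infty)$. Define $\bar N_S(\eta)=0$ if $\eta\le 1/\sqrt2$ and $\bar N_S(\eta)=\bar N_S^{(0)}(\eta)$ if $\eta>1/\sqrt2$. Then, for every $N_S>0$, $\xi=1$ is a maximizer of $\xi\mapsto I(\xi;N_S)$ over $[0,1]$ if and only if $N_S\le\bar N_S(\eta)$.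
   Context: $I(\xi;N_S)$ is the quantum Fisher information for estimating the transmission $\eta$ of a pure-loss (zero-temperature, $N_B=0$) bosonic channel $a\mapsto\eta a+\sqrt{1-\eta^2}\,v$ ($v$ vacuum), using a single-mode pure displaced squeezed state with total mean photon number $N_S$, of which $\xi N_S$ photons are in squeezing and $(1-\xi)N_S$ in displacement (displacement along the optimal angle). $\xi=1$ is the squeezed-vacuum state, $\xi=0$ the coherent state. *)

theory Defs
  imports "HOL-Analysis.Analysis"
begin

definition QFI :: "real \<Rightarrow> real \<Rightarrow> real \<Rightarrow> real" where
  "QFI eta xi N = 4 * N *
     ((1 - xi) / (1 - 2 * eta^2 * (sqrt (xi * N * (1 + xi * N)) - xi * N))
      + xi * ((1 - eta^2)^2 + eta^4) / ((1 - eta^2) * (1 + 2 * xi * N * eta^2 * (1 - eta^2))))"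

definition f1 :: "real \<Rightarrow> real \<Rightarrow> real" where
  "f1 eta N = deriv (\<lambda>xi. QFI eta xi N) 1 / (4 * N)"

definition Nbar :: "real \<Rightarrow> real" where
  "Nbar eta = (if eta \<le> 1 / sqrt 2 then 0 else (THE N. N > 0 \<and> f1 eta N = 0))"

end

theory Submission
  imports Defs
begin

definition Aq :: "real \<Rightarrow> real \<Rightarrow> real" where
  "Aq e x = 1 / (1 - 2 * e * (sqrt (x * (1 + x)) - x))"
definition kk :: "real \<Rightarrow> real" where "kk e = ((1 - e)^2 + e^2) / (1 - e)"
definition aa :: "real \<Rightarrow> real" where "aa e = 2 * e * (1 - e)"
definition phi :: "real \<Rightarrow> real \<Rightarrow> real" where
  "phi e x = kk e / (1 + aa e * x)^2 - Aq e x"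

lemma s_bound: assumes "0 \<le> x" shows "sqrt (x*(1+x)) - x < 1/2" "0 \<le> sqrt (x*(1+x)) - x"
proof -
  have "sqrt (x*(1+x)) < sqrt ((x+1/2)^2)" using assms by (intro real_sqrt_less_mono) (simp add: power2_eq_square algebra_simps)
  then show "sqrt (x*(1+x)) - x < 1/2" using assms by simp
  have "sqrt (x^2) \<le> sqrt (x*(1+x))" using assms by (intro real_sqrt_le_mono) (simp add: power2_eq_square algebra_simps)
  then show "0 \<le> sqrt (x*(1+x)) - x" using assms by simp
qed

lemma den_pos: assumes "0 \<le> x" "0 < e" "e < 1"
  shows "1 - e < 1 - 2 * e * (sqrt (x * (1 + x)) - x)" "1 - 2 * e * (sqrt (x * (1 + x)) - x) \<le> 1"
    "0 < 1 - 2 * e * (sqrt (x * (1 + x)) - x)"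
proof -
  have "e * (sqrt (x * (1 + x)) - x) < e*(1/2)" using s_bound[OF assms(1)] assms by (intro mult_strict_left_mono) auto
  then show "1 - e < 1 - 2 * e * (sqrt (x * (1 + x)) - x)" by linarith
  then show "0 < 1 - 2 * e * (sqrt (x * (1 + x)) - x)" using assms by linarith
  show "1 - 2 * e * (sqrt (x * (1 + x)) - x) \<le> 1" using s_bound[OF assms(1)] assms by simp
qed

lemma s_mono: assumes "0 \<le> x" "x \<le> y" shows "sqrt (x*(1+x)) - x \<le> sqrt (y*(1+y)) - y"
proof (cases "x = y")
  case False
  hence xy: "x < y" using assms by simp
  define sx where "sx = sqrt (x*(1+x))"
  define sy where "sy = sqrt (y*(1+y))"
  have sx2: "sx^2 = x*(1+x)" unfolding sx_def using assms by simp
  have sy2: "sy^2 = y*(1+y)" unfolding sy_def using assms by simp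
  have sxb: "sx < x + 1/2" "0 \<le> sx" using s_bound[of x] assms unfolding sx_def by auto
  have syb: "sy < y + 1/2" "0 < sy" using s_bound[of y] assms xy unfolding sy_def by auto
  have "(sy - sx) * (sy + sx) = (y - x) * (x + y + 1)" using sx2 sy2 by (simp add: power2_eq_square algebra_simps)
  moreover have "sy + sx \<le> x + y + 1" using sxb syb by simp
  moreover have "sy + sx > 0" using sxb syb by simp
  ultimately have "sy - sx \<ge> y - x"
    by (smt (verit, ccfv_SIG) mult_le_cancel_left xy mult.commute)
  thus ?thesis unfolding sx_def sy_def by simp
qed simp


lemma Aq_props: assumes "0 \<le> x" "0 < e" "e < 1"
  shows "1 \<le> Aq e x" "Aq e x < 1/(1-e)"
proof -
  note d = den_pos[OF assms]
  show "1 \<le> Aq e x" unfolding Aq_def using d(2,3) by simp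
  show "Aq e x < 1/(1-e)" unfolding Aq_def using d(1,3) assms by (intro divide_strict_left_mono) (auto intro!: mult_pos_pos)
qed

lemma Aq_mono: assumes "0 \<le> x" "x \<le> y" "0 < e" "e < 1"
  shows "Aq e x \<le> Aq e y"
proof -
  have "1 - 2 * e * (sqrt (y * (1 + y)) - y) \<le> 1 - 2 * e * (sqrt (x * (1 + x)) - x)"
    using s_mono[OF assms(1,2)] assms by (simp add: mult_left_mono)
  moreover have "0 < 1 - 2 * e * (sqrt (y * (1 + y)) - y)" using den_pos(3)[of y e] assms by simp
  ultimately show ?thesis unfolding Aq_def by (simp add: frac_le)
qed

lemma kk_pos: "0 < e \<Longrightarrow> e < 1 \<Longrightarrow> 0 < kk e"
  unfolding kk_def by (simp add: add_pos_nonneg)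
lemma aa_pos: "0 < e \<Longrightarrow> e < 1 \<Longrightarrow> 0 < aa e"
  unfolding aa_def by simp

lemma phi_strict: assumes "0 \<le> x" "x < y" "0 < e" "e < 1"
  shows "phi e y < phi e x"
proof -
  have a: "0 < aa e" "0 < kk e" using assms kk_pos aa_pos by auto
  have "1 + aa e * x < 1 + aa e * y" using a assms by simp
  moreover have "0 < 1 + aa e * x" using a assms by (simp add: add_pos_nonneg)
  ultimately have "(1 + aa e * x)^2 < (1 + aa e * y)^2" by (intro power_strict_mono) auto
  hence "kk e / (1 + aa e * y)^2 < kk e / (1 + aa e * x)^2"
  proof (rule divide_strict_left_mono)
    show "0 < kk e" using a by simp
    have "0 < (1 + aa e * x)^2" using \<open>0 < 1 + aa e * x\<close> by simp
    moreover have "0 < (1 + aa e * y)^2" using \<open>0 < 1 + aa e * x\<close> \<open>1 + aa e * x < 1 + aa e * y\<close> by simp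
    ultimately show "0 < (1 + aa e * y)^2 * (1 + aa e * x)^2" by simp
  qed
  moreover have "Aq e x \<le> Aq e y" using Aq_mono assms by simp
  ultimately show ?thesis unfolding phi_def by simp
qed

lemma phi0: assumes "0 < e" "e < 1" shows "phi e 0 = e * (2*e - 1) / (1 - e)"
  using assms unfolding phi_def kk_def Aq_def by (simp add: field_simps power2_eq_square)

lemma phi_cont: assumes "0 < e" "e < 1" shows "continuous_on {0..} (phi e)"
proof -
  have "continuous_on {0..} (\<lambda>x. 1 - 2 * e * (sqrt (x * (1 + x)) - x))"
    by (intro continuous_intros)
  moreover have "\<forall>x\<in>{0..}. 1 - 2 * e * (sqrt (x * (1 + x)) - x) \<noteq> 0" using den_pos(3) assms
    by force
  moreover have "\<forall>x\<in>{0::real..}. (1 + aa e * x)^2 \<noteq> 0" using aa_pos[OF assms]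
    by (simp add: add_pos_nonneg order_less_imp_not_eq2)
  ultimately show ?thesis unfolding phi_def Aq_def
    by (intro continuous_intros) auto
qed

lemma QFI_F: "QFI eta xi N = 4*((N - xi*N)*Aq (eta^2) (xi*N) + xi*N*(kk (eta^2)/(1 + aa (eta^2)*(xi*N))))"
  unfolding QFI_def Aq_def kk_def aa_def by (simp add: algebra_simps)

lemma Aq_diff: assumes "0 < N" "0 < e" "e < 1" shows "\<exists>D. (Aq e has_real_derivative D) (at N)"
proof -
  have d0: "1 - 2 * e * (sqrt (N * (1 + N)) - N) \<noteq> 0" using den_pos(3)[of N e] assms by auto
  have p: "N * (1 + N) \<noteq> 0" using assms by simp
  show ?thesis
  proof -
    have h1: "((\<lambda>x. x*(1+x)) has_real_derivative (1+N) + N) (at N)"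
      by (auto intro!: derivative_eq_intros)
    have hs: "(sqrt has_real_derivative inverse (sqrt (N*(1+N)))/2) (at (N*(1+N)))"
      by (rule DERIV_real_sqrt) (use assms in simp)
    note h2 = DERIV_chain2[OF hs h1]
    note h3 = DERIV_diff[OF DERIV_const[of 1] DERIV_cmult[OF DERIV_diff[OF h2 DERIV_ident], of "2*e"]]
    note h4 = DERIV_inverse_fun[OF h3 d0]
    have "Aq e = (\<lambda>x. 1 / (1 - 2 * e * (sqrt (x * (1 + x)) - x)))" by (rule ext) (simp add: Aq_def)
    then show ?thesis using h4 by (auto simp: inverse_eq_divide)
  qed
qed


lemma alg_aux: fixes a k N :: real assumes "1 + a * N \<noteq> 0"
  shows "N * (k * inverse (1 + a * N)) + k * - (a * N * inverse ((1 + a * N) ^ Suc (Suc 0))) * N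
     = N * k / (1 + a * N)^2"
proof -
  define t where "t = 1 + a * N"
  have aN: "a * N = t - 1" unfolding t_def by simp
  have t: "t \<noteq> 0" using assms t_def by simp
  show ?thesis unfolding t_def[symmetric] aN using t by (simp add: field_simps power2_eq_square)
qed

lemma f1_eq: assumes "0 < N" "0 < eta" "eta < 1" shows "f1 eta N = phi (eta^2) N"
proof -
  define e where "e = eta^2"
  have e: "0 < e" "e < 1" using assms unfolding e_def by (auto simp: power_less_one_iff)
  obtain D where D: "(Aq e has_real_derivative D) (at N)" using Aq_diff[OF assms(1) e] by blast
  have D2: "((\<lambda>xi. Aq e (xi * N)) has_real_derivative D * N) (at 1)"
    using DERIV_chain2[OF _ DERIV_cmult_right[OF DERIV_ident, of N]] D by (simp add: mult.commute)
  have "((\<lambda>xi. N - xi*N) has_real_derivative -N) (at 1)" by (rule derivative_eq_intros refl | simp)+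
  from DERIV_mult[OF this D2]
  have u: "((\<lambda>xi. (N - xi*N) * Aq e (xi * N)) has_real_derivative (- N) * Aq e N) (at 1)"
    by simp
  have d1: "1 + aa e * N \<noteq> 0" using aa_pos[OF e] assms by (simp add: add_pos_pos order_less_imp_not_eq2)
  have w: "((\<lambda>xi. xi*N*(kk e/(1 + aa e*(xi*N)))) has_real_derivative N * kk e / (1 + aa e * N)^2) (at 1)"
  proof -
    have g: "((\<lambda>xi. 1 + aa e*(xi*N)) has_real_derivative aa e * N) (at 1)"
      by (auto intro!: derivative_eq_intros)
    have d1': "1 + aa e*(1*N) \<noteq> 0" using d1 by simp
    note h = DERIV_mult[OF DERIV_cmult_right[OF DERIV_ident, of N] DERIV_cmult[OF DERIV_inverse_fun[OF g d1'], of "kk e"]]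
    have eq: "1 * N * (kk e * inverse (1 + aa e * (1 * N))) + 
        kk e * - (aa e * N * inverse ((1 + aa e * (1 * N)) ^ Suc (Suc 0))) * (1 * N) = N * kk e / (1 + aa e * N)^2"
      using alg_aux[OF d1] by simp
    have "(\<lambda>xi. xi*N*(kk e/(1 + aa e*(xi*N)))) = (\<lambda>xi. xi*N*(kk e * inverse (1 + aa e*(xi*N))))"
      by (simp add: divide_inverse)
    then show ?thesis using h unfolding eq by simp
  qed
  have "((\<lambda>xi. QFI eta xi N) has_real_derivative 4 * N * phi e N) (at 1)"
    unfolding QFI_F e_def[symmetric]
    using DERIV_cmult[OF DERIV_add[OF u w], of 4] unfolding phi_def by (simp add: algebra_simps)
  then show ?thesis unfolding f1_def e_def using assms by (simp add: DERIV_imp_deriv)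
qed


definition FF :: "real \<Rightarrow> real \<Rightarrow> real \<Rightarrow> real" where
  "FF e N x = (N - x) * Aq e x + x * (kk e / (1 + aa e * x))"

lemma FF_diff: assumes "0 \<le> x" "0 \<le> N" "0 < e" "e < 1"
  shows "FF e N N - FF e N x = (N - x) * (kk e / ((1 + aa e * N) * (1 + aa e * x)) - Aq e x)"
proof -
  have a: "0 < aa e" using aa_pos assms by simp
  define p where "p = 1 + aa e * N"
  define q where "q = 1 + aa e * x"
  have p1: "p \<noteq> 0" "q \<noteq> 0" using a assms unfolding p_def q_def
    by (smt (verit) mult_nonneg_nonneg)+
  have "N * (kk e / p) - x * (kk e / q) = kk e * (N * q - x * p) / (p * q)"
    using p1 by (simp add: field_simps)
  also have "N * q - x * p = N - x" unfolding p_def q_def by (simp add: algebra_simps)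
  finally have "N * (kk e / p) - x * (kk e / q) = (N - x) * (kk e / (p * q))" by simp
  then show ?thesis unfolding FF_def p_def[symmetric] q_def[symmetric] by (simp add: algebra_simps)
qed

lemma suff: assumes "0 \<le> x" "x \<le> N" "0 < e" "e < 1" "0 \<le> phi e N"
  shows "FF e N x \<le> FF e N N"
proof -
  have a: "0 < aa e" "0 < kk e" using aa_pos kk_pos assms by auto
  have p: "0 < 1 + aa e * x" "1 + aa e * x \<le> 1 + aa e * N" "0 < 1 + aa e * N" using a assms
    by (auto simp: add_pos_nonneg mult_left_mono)
  have "kk e / (1 + aa e * N)^2 \<le> kk e / ((1 + aa e * N) * (1 + aa e * x))"
    unfolding power2_eq_square using p a
    by (intro divide_left_mono mult_left_mono mult_pos_pos) auto
  moreover have "Aq e x \<le> Aq e N" using Aq_mono assms by simp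
  ultimately have "0 \<le> kk e / ((1 + aa e * N) * (1 + aa e * x)) - Aq e x"
    using assms(5) unfolding phi_def by linarith
  moreover have "FF e N N - FF e N x = (N - x) * (kk e / ((1 + aa e * N) * (1 + aa e * x)) - Aq e x)"
    by (rule FF_diff) (use assms in auto)
  ultimately have "0 \<le> FF e N N - FF e N x"
    using assms by simp
  then show ?thesis by simp
qed

lemma bcont: assumes "0 < e" "e < 1" "0 \<le> N"
  shows "continuous_on {0..} (\<lambda>x. kk e / ((1 + aa e * N) * (1 + aa e * x)) - Aq e x)"
proof -
  have "continuous_on {0..} (\<lambda>x. 1 - 2 * e * (sqrt (x * (1 + x)) - x))"
    by (intro continuous_intros)
  moreover have "\<forall>x\<in>{0..}. 1 - 2 * e * (sqrt (x * (1 + x)) - x) \<noteq> 0" using den_pos(3) assms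
    by force
  moreover have "\<forall>x\<in>{0::real..}. (1 + aa e * N) * (1 + aa e * x) \<noteq> 0" using aa_pos[OF assms(1,2)] assms
    by (simp add: add_pos_nonneg order_less_imp_not_eq2)
  ultimately show ?thesis unfolding Aq_def
    by (intro continuous_intros) auto
qed

lemma necc: assumes "0 < N" "0 < e" "e < 1" "phi e N < 0"
  shows "\<exists>x. 0 \<le> x \<and> x \<le> N \<and> FF e N N < FF e N x"
proof -
  define b where "b = (\<lambda>x. kk e / ((1 + aa e * N) * (1 + aa e * x)) - Aq e x)"
  have bN: "b N = phi e N" unfolding b_def phi_def by (simp add: power2_eq_square)
  have "continuous_on {0..} b" unfolding b_def using bcont assms by simp
  then obtain d where d: "d > 0" "\<forall>x'\<in>{0..}. dist x' N < d \<longrightarrow> dist (b x') (b N) < - phi e N"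
    using assms unfolding continuous_on_iff
    by (metis atLeast_iff less_eq_real_def neg_0_less_iff_less)
  define x where "x = max (N/2) (N - d/2)"
  have x: "0 \<le> x" "x < N" "dist x N < d" using d assms unfolding x_def dist_real_def by auto
  have "dist (b x) (b N) < - phi e N" using d x by auto
  hence "b x < 0" using bN unfolding dist_real_def by linarith
  moreover have "FF e N N - FF e N x = (N - x) * b x" unfolding b_def
    by (rule FF_diff) (use assms x in auto)
  moreover have "0 < N - x" using x by simp
  ultimately have "FF e N N - FF e N x < 0" by (simp add: mult_pos_neg)
  thus ?thesis using x by (intro exI[of _ x]) auto
qed

lemma max_iff: assumes "0 < N" "0 < eta" "eta < 1"
  shows "(\<forall>xi \<in> {0..1}. QFI eta xi N \<le> QFI eta 1 N) \<longleftrightarrow> 0 \<le> phi (eta^2) N"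
proof -
  define e where "e = eta^2"
  have e: "0 < e" "e < 1" using assms unfolding e_def by (auto simp: power_less_one_iff)
  have Q: "QFI eta xi N = 4 * FF e N (xi * N)" for xi unfolding QFI_F FF_def e_def by simp
  show ?thesis unfolding e_def[symmetric] Q
  proof
    assume h: "\<forall>xi\<in>{0..1}. 4 * FF e N (xi * N) \<le> 4 * FF e N (1 * N)"
    show "0 \<le> phi e N"
    proof (rule ccontr)
      assume "\<not> 0 \<le> phi e N"
      then obtain x where x: "0 \<le> x" "x \<le> N" "FF e N N < FF e N x" using necc[OF assms(1) e] by force
      have "x / N \<in> {0..1}" using x assms by auto
      with h have "4 * FF e N (x / N * N) \<le> 4 * FF e N (1 * N)" by blast
      thus False using x assms by simp
    qed
  next
    assume h: "0 \<le> phi e N"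
    show "\<forall>xi\<in>{0..1}. 4 * FF e N (xi * N) \<le> 4 * FF e N (1 * N)"
    proof
      fix xi :: real assume "xi \<in> {0..1}"
      hence "0 \<le> xi * N" "xi * N \<le> N" using assms by (auto simp: mult_left_le_one_le)
      thus "4 * FF e N (xi * N) \<le> 4 * FF e N (1 * N)" using suff[OF _ _ e h] by simp
    qed
  qed
qed

lemma eta_iff: assumes "0 < eta" shows "eta \<le> 1 / sqrt 2 \<longleftrightarrow> eta^2 \<le> 1/2"
proof -
  have "1 / sqrt 2 = sqrt (1/2)" by (simp add: real_sqrt_divide)
  moreover have "eta = sqrt (eta^2)" using assms by simp
  ultimately have "eta \<le> 1 / sqrt 2 \<longleftrightarrow> sqrt (eta^2) \<le> sqrt (1/2)" by simp
  also have "\<dots> \<longleftrightarrow> eta^2 \<le> 1/2" by (rule real_sqrt_le_iff)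
  finally show ?thesis .
qed

lemma exists_zero: assumes "1/2 < e" "e < 1"
  shows "\<exists>z. 0 < z \<and> phi e z = 0"
proof -
  have e: "0 < e" using assms by simp
  have a: "0 < aa e" "0 < kk e" using aa_pos kk_pos e assms by auto
  define M where "M = kk e / aa e"
  have M: "0 \<le> M" unfolding M_def using a by simp
  have "phi e 0 > 0" unfolding phi0[OF e assms(2)] using assms by (simp add: divide_pos_pos)
  have aM: "aa e * M = kk e" unfolding M_def using a by simp
  have "kk e < (1 + kk e)^2" by (simp add: power2_eq_square algebra_simps) (smt (verit) a(2) mult_pos_pos)
  hence "kk e / (1 + kk e)^2 < 1" using a by (simp add: divide_less_eq)
  hence "phi e M < 0" unfolding phi_def aM using Aq_props(1)[OF M e assms(2)] by linarith
  then obtain z where z: "0 \<le> z" "z \<le> M" "phi e z = 0"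
    using IVT2'[of "phi e" M 0 0] \<open>phi e 0 > 0\<close> M continuous_on_subset[OF phi_cont[OF e assms(2)]]
    by fastforce
  have "z \<noteq> 0" using z \<open>phi e 0 > 0\<close> by auto
  thus ?thesis using z by (intro exI[of _ z]) auto
qed

theorem proposition1:
  fixes eta :: real
  assumes "0 < eta" and "eta < 1"
  shows "(eta > 1 / sqrt 2 \<longrightarrow> (\<exists>!N. N > 0 \<and> f1 eta N = 0))
         \<and> (\<forall>N > 0. (\<forall>xi \<in> {0..1}. QFI eta xi N \<le> QFI eta 1 N) \<longleftrightarrow> N \<le> Nbar eta)"
proof -
  define e where "e = eta^2"
  have e: "0 < e" "e < 1" using assms unfolding e_def by (auto simp: power_less_one_iff)
  have f1phi: "N > 0 \<and> f1 eta N = 0 \<longleftrightarrow> N > 0 \<and> phi e N = 0" for N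
    using f1_eq assms unfolding e_def by auto
  have uniq: "x = y" if "0 < x" "phi e x = 0" "0 < y" "phi e y = 0" for x y
    using phi_strict[of x y e] phi_strict[of y x e] that e by (cases x y rule: linorder_cases) auto
  show ?thesis
  proof (cases "eta \<le> 1 / sqrt 2")
    case True
    hence e2: "e \<le> 1/2" using eta_iff assms e_def by simp
    have "Nbar eta = 0" unfolding Nbar_def using True by simp
    moreover have "phi e N < 0" if "N > 0" for N
    proof -
      have "phi e N < phi e 0" using phi_strict[of 0 N e] that e by simp
      moreover have "phi e 0 \<le> 0" unfolding phi0[OF e] using e e2
        by (intro divide_nonpos_pos mult_nonneg_nonpos) auto
      ultimately show ?thesis by simp
    qed
    ultimately show ?thesis using True max_iff assms unfolding e_def by force
  next
    case False
    hence e2: "1/2 < e" using eta_iff assms e_def by simp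
    obtain z where z: "0 < z" "phi e z = 0" using exists_zero[OF e2 e(2)] by blast
    have ex1: "\<exists>!N. N > 0 \<and> f1 eta N = 0" unfolding f1phi using z uniq by blast
    have Nb: "Nbar eta = z" unfolding Nbar_def using False
      by (simp add: f1phi) (rule the_equality, use z uniq in auto)
    have "0 \<le> phi e N \<longleftrightarrow> N \<le> z" if "N > 0" for N
      using phi_strict[of N z e] phi_strict[of z N e] that z e
      by (cases N z rule: linorder_cases) auto
    thus ?thesis using ex1 Nb max_iff assms unfolding e_def by auto
  qed
qed

end
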